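(* Let $A$ be a unital C*-algebra. There is a bijective correspondence between quasi-states $\rho$ on $A$ and probability integrals on $\underline{A}_{\mathrm{sa}}$ internal to $\mathcal{T}(A)=[\mathcal{C}(A),\mathbf{Set}]$; externally, the latter are families $(I_C)_{C\in\mathcal{C}(A)}$ of positive linear functionals $I_C\colon C_{\mathrm{sa}}\to\mathbb{R}$ with $I_C(1)=1$ that are natural, i.e. $I_D|_{C_{\mathrm{sa}}}=I_C$ whenever $C\subseteq D$. The correspondence sends $\rho$ to $I_C=\rho|_{C_{\mathrm{sa}}}$ and, conversely, $(I_C)$ to the unique complex-linear-on-real-and-imaginary-parts extension of $a\mapsto I_{C^*(a)}(a)$ ($a\in A_{\mathrm{sa}}$, $C^*(a)$ the C*-subalgebra generated by $a$ and $1$). Under this correspondence faithful quasi-states correspond to faithful probability integrals (those with $I_C(f)=0$, $f\ge0$ implying $f=0$ for all $C$).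
   Context: $\mathcal{C}(A)$: poset of commutative unital C*-subalgebras of $A$ under inclusion; $\underline{A}(C)=C$ is the Bohrification, an internal commutative C*-algebra, and $\underline{A}_{\mathrm{sa}}(C)=C_{\mathrm{sa}}$; the internal Dedekind reals in $\mathcal{T}(A)$ form the constant functor $C\mapsto\mathbb{R}$. A quasi-linear functional on $A$ is a map $\rho\colon A\to\mathbb{C}$ that is linear on every commutative C*-subalgebra and satisfies $\rho(a+ib)=\rho(a)+i\rho(b)$ for all $a,b\in A_{\mathrm{sa}}$; it is a quasi-state if moreover $\rho(A^+)\subseteq\mathbb{R}^+$ and $\rho(1)=1$; it is faithful if $\rho(a)=0$ with $a\ge0$ implies $a=0$. A probability integral on a Riesz space $R$ with strong unit $1$ is a linear $I\colon R\to\mathbb{R}$ with $I(f)\ge0$ for $f\ge0$ and $I(1)=1$. *)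

theory Defs
  imports "HOL-Analysis.Analysis"
begin

text \<open>The real scalar multiplication inherited from real_vector is required
  to agree with the complex one on real scalars.\<close>

class cstar_algebra = real_normed_algebra_1 + banach +
  fixes cscale :: "complex \<Rightarrow> 'a \<Rightarrow> 'a"
    and adj :: "'a \<Rightarrow> 'a"
  assumes cscale_add_right: "cscale c (x + y) = cscale c x + cscale c y"
    and cscale_add_left: "cscale (c + d) x = cscale c x + cscale d x"
    and cscale_cscale: "cscale c (cscale d x) = cscale (c * d) x"
    and cscale_one: "cscale 1 x = x"
    and scaleR_cscale: "scaleR r x = cscale (complex_of_real r) x"
    and norm_cscale: "norm (cscale c x) = cmod c * norm x"
    and cscale_mult_left: "cscale c x * y = cscale c (x * y)"
    and cscale_mult_right: "x * cscale c y = cscale c (x * y)"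
    and adj_add: "adj (x + y) = adj x + adj y"
    and adj_cscale: "adj (cscale c x) = cscale (cnj c) (adj x)"
    and adj_mult: "adj (x * y) = adj y * adj x"
    and adj_adj: "adj (adj x) = x"
    and cstar_identity: "norm (adj x * x) = norm x ^ 2"

instantiation complex :: cstar_algebra
begin
definition cscale_complex :: "complex \<Rightarrow> complex \<Rightarrow> complex" where "cscale_complex c x = c * x"
definition adj_complex :: "complex \<Rightarrow> complex" where "adj_complex x = cnj x"
instance
  by standard (auto simp: cscale_complex_def adj_complex_def algebra_simps norm_mult
      complex_mod_cnj power2_eq_square scaleR_conv_of_real)
end

context cstar_algebra
begin

definition self_adjoint :: "'a \<Rightarrow> bool" where
  "self_adjoint a \<longleftrightarrow> adj a = a"

definition spectrum :: "'a \<Rightarrow> complex set" where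
  "spectrum a = {z. \<not> (\<exists>b. b * (a - cscale z 1) = 1 \<and> (a - cscale z 1) * b = 1)}"

definition positive :: "'a \<Rightarrow> bool" where
  "positive a \<longleftrightarrow> self_adjoint a \<and> spectrum a \<subseteq> {z. Im z = 0 \<and> Re z \<ge> 0}"

definition unital_cstar_subalgebra :: "'a set \<Rightarrow> bool" where
  "unital_cstar_subalgebra C \<longleftrightarrow>
     1 \<in> C \<and> closed C \<and>
     (\<forall>x\<in>C. \<forall>y\<in>C. x + y \<in> C \<and> x * y \<in> C) \<and>
     (\<forall>c. \<forall>x\<in>C. cscale c x \<in> C) \<and>
     (\<forall>x\<in>C. adj x \<in> C)"

definition CA :: "'a set set" where
  "CA = {C. unital_cstar_subalgebra C \<and> (\<forall>x\<in>C. \<forall>y\<in>C. x * y = y * x)}"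

definition gen_cstar :: "'a \<Rightarrow> 'a set" where
  "gen_cstar a = \<Inter>{C. unital_cstar_subalgebra C \<and> a \<in> C}"

text \<open>Real and imaginary parts: a = re_part a + i im_part a with both self-adjoint.\<close>
definition re_part :: "'a \<Rightarrow> 'a" where
  "re_part a = cscale (1/2) (a + adj a)"

definition im_part :: "'a \<Rightarrow> 'a" where
  "im_part a = cscale (1 / (2 * \<i>)) (a - adj a)"

definition quasi_linear :: "('a \<Rightarrow> complex) \<Rightarrow> bool" where
  "quasi_linear \<rho> \<longleftrightarrow>
     (\<forall>C\<in>CA. \<forall>x\<in>C. \<forall>y\<in>C. \<forall>c. \<rho> (x + y) = \<rho> x + \<rho> y \<and> \<rho> (cscale c x) = c * \<rho> x) \<and>
     (\<forall>a b. self_adjoint a \<longrightarrow> self_adjoint b \<longrightarrow> \<rho> (a + cscale \<i> b) = \<rho> a + \<i> * \<rho> b)"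

definition quasi_state :: "('a \<Rightarrow> complex) \<Rightarrow> bool" where
  "quasi_state \<rho> \<longleftrightarrow> quasi_linear \<rho> \<and>
     (\<forall>a. positive a \<longrightarrow> Im (\<rho> a) = 0 \<and> Re (\<rho> a) \<ge> 0) \<and> \<rho> 1 = 1"

definition faithful_qs :: "('a \<Rightarrow> complex) \<Rightarrow> bool" where
  "faithful_qs \<rho> \<longleftrightarrow> (\<forall>a. positive a \<longrightarrow> \<rho> a = 0 \<longrightarrow> a = 0)"

text \<open>External description of an internal probability integral on the
  self-adjoint part of the Bohrification: a natural family (I_C) of positive
  real-linear functionals on C_sa with I_C(1) = 1.  Families are represented
  as functions I C f, extensional (= 0) outside C \<in> \<C>(A), f \<in> C_sa.\<close>
definition prob_integral_family :: "('a set \<Rightarrow> 'a \<Rightarrow> real) \<Rightarrow> bool" where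
  "prob_integral_family I \<longleftrightarrow>
     (\<forall>C\<in>CA.
        (\<forall>f\<in>C. \<forall>g\<in>C. self_adjoint f \<longrightarrow> self_adjoint g \<longrightarrow> I C (f + g) = I C f + I C g) \<and>
        (\<forall>f\<in>C. \<forall>r. self_adjoint f \<longrightarrow> I C (scaleR r f) = r * I C f) \<and>
        (\<forall>f\<in>C. positive f \<longrightarrow> I C f \<ge> 0) \<and>
        I C 1 = 1) \<and>
     (\<forall>C\<in>CA. \<forall>D\<in>CA. C \<subseteq> D \<longrightarrow> (\<forall>f\<in>C. self_adjoint f \<longrightarrow> I D f = I C f)) \<and>
     (\<forall>C f. \<not> (C \<in> CA \<and> f \<in> C \<and> self_adjoint f) \<longrightarrow> I C f = 0)"

definition faithful_pi :: "('a set \<Rightarrow> 'a \<Rightarrow> real) \<Rightarrow> bool" where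
  "faithful_pi I \<longleftrightarrow> (\<forall>C\<in>CA. \<forall>f\<in>C. positive f \<longrightarrow> I C f = 0 \<longrightarrow> f = 0)"

definition qs_to_pi :: "('a \<Rightarrow> complex) \<Rightarrow> ('a set \<Rightarrow> 'a \<Rightarrow> real)" where
  "qs_to_pi \<rho> = (\<lambda>C f. if C \<in> CA \<and> f \<in> C \<and> self_adjoint f then Re (\<rho> f) else 0)"

definition pi_to_qs :: "('a set \<Rightarrow> 'a \<Rightarrow> real) \<Rightarrow> ('a \<Rightarrow> complex)" where
  "pi_to_qs I = (\<lambda>a. complex_of_real (I (gen_cstar (re_part a)) (re_part a))
                     + \<i> * complex_of_real (I (gen_cstar (im_part a)) (im_part a)))"

end

end

theory Submission
  imports Defs
begin

lemma neumann:
  fixes x :: "'a::{real_normed_algebra_1,banach}"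
  assumes "norm x < 1"
  shows "\<exists>b. b * (1 - x) = 1 \<and> (1 - x) * b = 1"
proof -
  have s: "summable (\<lambda>n. x ^ n)" by (rule complete_algebra_summable_geometric[OF assms])
  have t: "(\<lambda>n. x ^ n - x ^ Suc n) sums (1 - 0)"
    using telescope_sums'[OF LIMSEQ_power_zero[OF assms]] by simp
  have "(1 - x) * suminf (\<lambda>n. x ^ n) = (\<Sum>n. (1 - x) * x ^ n)"
    using suminf_mult[OF s] by simp
  also have "\<dots> = 1" using sums_unique[OF t, symmetric]
    by (simp add: algebra_simps)
  finally have 1: "(1 - x) * suminf (\<lambda>n. x ^ n) = 1" .
  have "suminf (\<lambda>n. x ^ n) * (1 - x) = (\<Sum>n. x ^ n * (1 - x))"
    using suminf_mult2[OF s] by simp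
  also have "\<dots> = 1" using sums_unique[OF t, symmetric]
    by (simp add: algebra_simps power_commutes)
  finally show ?thesis using 1 by blast
qed


lemma cscale_zero_right[simp]: "cscale c 0 = 0"
  using cscale_add_right[of c 0 0] by simp
lemma cscale_zero_left[simp]: "cscale 0 x = 0"
  using cscale_add_left[of 0 0 x] by simp
lemma cscale_minus_right: "cscale c (- x) = - cscale c x"
proof -
  have "cscale c x + cscale c (-x) = 0" by (simp add: cscale_add_right[symmetric])
  thus ?thesis by (rule minus_unique[symmetric])
qed
lemma cscale_minus_left: "cscale (- c) x = - cscale c x"
proof -
  have "cscale c x + cscale (-c) x = 0" by (simp add: cscale_add_left[symmetric])
  thus ?thesis by (rule minus_unique[symmetric])
qed
lemma cscale_diff_right: "cscale c (x - y) = cscale c x - cscale c y"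
  using cscale_add_right[of c x "-y"] by (simp add: cscale_minus_right)
lemma cscale_diff_left: "cscale (c - d) x = cscale c x - cscale d x"
  using cscale_add_left[of c "-d" x] by (simp add: cscale_minus_left)
lemma adj_zero[simp]: "adj 0 = 0"
  using adj_add[of 0 0] by simp
lemma adj_minus: "adj (- x) = - adj x"
proof -
  have "adj x + adj (-x) = 0" by (simp add: adj_add[symmetric])
  thus ?thesis by (rule minus_unique[symmetric])
qed
lemma adj_diff: "adj (x - y) = adj x - adj y"
  using adj_add[of x "-y"] by (simp add: adj_minus)
lemma adj_one[simp]: "adj 1 = 1"
proof -
  have "adj 1 = adj 1 * adj (adj 1)" by (simp only: adj_adj mult_1_right)
  also have "\<dots> = adj (adj 1 * 1)" by (simp only: adj_mult)
  also have "\<dots> = 1" by (simp only: adj_adj mult_1_right)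
  finally show ?thesis .
qed
lemma add_self: "x + x = cscale 2 x"
  using cscale_add_left[of 1 1 x] by (simp add: cscale_one)

lemma re_sa: "self_adjoint (re_part a)"
  unfolding self_adjoint_def re_part_def
  by (simp add: adj_cscale adj_add adj_adj add.commute)

lemma im_sa: "self_adjoint (im_part a)"
proof -
  have "cnj (1 / (2 * \<i>)) = - (1 / (2*\<i>))" by (simp add: complex_eq_iff)
  then show ?thesis unfolding self_adjoint_def im_part_def
    by (simp add: adj_cscale adj_diff adj_adj cscale_minus_left cscale_diff_right)
qed

lemma re_im: "a = re_part a + cscale \<i> (im_part a)"
proof -
  have "re_part a + cscale \<i> (im_part a) = cscale (1/2) (a + adj a) + cscale (1/2) (a - adj a)"
    by (simp add: re_part_def im_part_def cscale_cscale)
  also have "\<dots> = cscale (1/2) (a + adj a + (a - adj a))"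
    by (rule cscale_add_right[symmetric])
  also have "a + adj a + (a - adj a) = a + a" by (simp add: algebra_simps)
  also have "cscale (1/2) (a + a) = a" by (simp add: add_self cscale_cscale cscale_one)
  finally show ?thesis by simp
qed

lemma re_im_unique:
  assumes "self_adjoint h" "self_adjoint k"
  shows "re_part (h + cscale \<i> k) = h" "im_part (h + cscale \<i> k) = k"
proof -
  have adjx: "adj (h + cscale \<i> k) = h - cscale \<i> k"
    using assms by (simp add: self_adjoint_def adj_add adj_cscale cscale_minus_left)
  have "h + cscale \<i> k + (h - cscale \<i> k) = h + h" by (simp add: algebra_simps)
  then show "re_part (h + cscale \<i> k) = h"
    unfolding re_part_def adjx
    by (simp add: add_self cscale_cscale cscale_one)
  have "(h + cscale \<i> k) - (h - cscale \<i> k) = cscale \<i> k + cscale \<i> k"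
    by (simp add: algebra_simps)
  also have "\<dots> = cscale (2*\<i>) k" by (simp add: add_self cscale_cscale)
  finally have "(h + cscale \<i> k) - (h - cscale \<i> k) = cscale (2*\<i>) k" .
  then show "im_part (h + cscale \<i> k) = k"
    unfolding im_part_def adjx
    by (simp add: cscale_cscale cscale_one)
qed


lemma comm_mult:
  fixes x y z :: "'b::ring"
  assumes "x*y = y*x" "z*y = y*z" shows "(x*z)*y = y*(x*z)"
proof -
  have "(x*z)*y = x*(z*y)" by (simp add: mult.assoc)
  also have "\<dots> = x*(y*z)" using assms by simp
  also have "\<dots> = (x*y)*z" by (simp add: mult.assoc)
  also have "\<dots> = (y*x)*z" using assms by simp
  also have "\<dots> = y*(x*z)" by (simp add: mult.assoc)
  finally show ?thesis .
qed

lemma comm_sub: "unital_cstar_subalgebra {x. x*y = y*x \<and> x * adj y = adj y * x}"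
  unfolding unital_cstar_subalgebra_def
proof (intro conjI ballI allI)
  have "{x. x*y = y*x \<and> x * adj y = adj y * x} = {x. x*y = y*x} \<inter> {x. x * adj y = adj y * x}"
    by blast
  moreover have "closed {x. x*y = y*x}"
    by (rule closed_Collect_eq) (intro continuous_intros)+
  moreover have "closed {x. x * adj y = adj y * x}"
    by (rule closed_Collect_eq) (intro continuous_intros)+
  ultimately show "closed {x. x*y = y*x \<and> x * adj y = adj y * x}" by (simp only: closed_Int)
  show "1 \<in> {x. x*y = y*x \<and> x * adj y = adj y * x}" by simp
  fix x z assume x: "x \<in> {x. x*y = y*x \<and> x * adj y = adj y * x}"
    and z: "z \<in> {x. x*y = y*x \<and> x * adj y = adj y * x}"
  then show "x + z \<in> {x. x*y = y*x \<and> x * adj y = adj y * x}"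
    by (simp add: distrib_left distrib_right)
  from x z show "x * z \<in> {x. x*y = y*x \<and> x * adj y = adj y * x}"
    by (simp add: comm_mult)
next
  fix c x assume x: "x \<in> {x. x*y = y*x \<and> x * adj y = adj y * x}"
  then show "cscale c x \<in> {x. x*y = y*x \<and> x * adj y = adj y * x}"
    by (simp add: cscale_mult_left cscale_mult_right)
next
  fix x assume x: "x \<in> {x. x*y = y*x \<and> x * adj y = adj y * x}"
  have 1: "adj x * y = y * adj x"
  proof -
    have "adj x * y = adj x * adj (adj y)" by (simp only: adj_adj)
    also have "\<dots> = adj (adj y * x)" by (simp only: adj_mult)
    also have "\<dots> = adj (x * adj y)" using x by simp
    also have "\<dots> = y * adj x" by (simp only: adj_mult adj_adj)
    finally show ?thesis .
  qed
  have 2: "adj x * adj y = adj y * adj x"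
  proof -
    have "adj x * adj y = adj (y * x)" by (simp only: adj_mult)
    also have "\<dots> = adj (x * y)" using x by simp
    also have "\<dots> = adj y * adj x" by (simp only: adj_mult)
    finally show ?thesis .
  qed
  show "adj x \<in> {x. x*y = y*x \<and> x * adj y = adj y * x}" using 1 2 by simp
qed

lemma gen_sub: "unital_cstar_subalgebra (gen_cstar a)"
  unfolding gen_cstar_def unital_cstar_subalgebra_def
  by (auto intro!: closed_Inter)

lemma gen_mem: "a \<in> gen_cstar a"
  unfolding gen_cstar_def by auto

lemma gen_least: "unital_cstar_subalgebra C \<Longrightarrow> a \<in> C \<Longrightarrow> gen_cstar a \<subseteq> C"
  unfolding gen_cstar_def by auto

lemma gen_CA: assumes "self_adjoint a" shows "gen_cstar a \<in> CA"
proof -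
  have A: "gen_cstar a \<subseteq> {x. x*a = a*x \<and> x * adj a = adj a * x}"
    using assms by (intro gen_least comm_sub) (simp add: self_adjoint_def)
  have "\<forall>x\<in>gen_cstar a. \<forall>y\<in>gen_cstar a. x * y = y * x"
  proof (intro ballI)
    fix x y assume x: "x \<in> gen_cstar a" and y: "y \<in> gen_cstar a"
    have "adj y \<in> gen_cstar a" using y gen_sub unfolding unital_cstar_subalgebra_def by blast
    then have "a \<in> {x. x*y = y*x \<and> x * adj y = adj y * x}" using A y by auto
    then have "gen_cstar a \<subseteq> {x. x*y = y*x \<and> x * adj y = adj y * x}"
      by (intro gen_least comm_sub)
    then show "x * y = y * x" using x by auto
  qed
  then show ?thesis unfolding CA_def using gen_sub by blast
qed


lemma spec_bound:
  fixes h :: "'a::cstar_algebra"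
  assumes "z \<in> spectrum h" shows "cmod z \<le> norm h"
proof (rule ccontr)
  assume "\<not> cmod z \<le> norm h"
  then have lt: "norm h < cmod z" by simp
  then have z0: "z \<noteq> 0" using norm_ge_zero[of h] by auto
  define y where "y = cscale (1/z) h"
  have "norm y = norm h / cmod z" unfolding y_def norm_cscale by (simp add: norm_divide field_simps)
  also have "\<dots> < 1" using lt z0 by (simp add: field_simps)
  finally obtain b where b: "b * (1 - y) = 1" "(1 - y) * b = 1" using neumann by blast
  have e: "h - cscale z 1 = cscale (-z) (1 - y)"
    using z0 by (simp add: y_def cscale_diff_right cscale_cscale cscale_minus_left cscale_one)
  have "cscale (-(1/z)) b * (h - cscale z 1) = 1"
    unfolding e using z0 by (simp add: cscale_mult_left cscale_mult_right cscale_cscale b cscale_one)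
  moreover have "(h - cscale z 1) * cscale (-(1/z)) b = 1"
    unfolding e using z0 by (simp add: cscale_mult_left cscale_mult_right cscale_cscale b cscale_one)
  ultimately show False using assms unfolding spectrum_def by blast
qed

lemma spec_shift:
  fixes h :: "'a::cstar_algebra"
  shows "z \<in> spectrum (h + cscale w 1) \<longleftrightarrow> z - w \<in> spectrum h"
proof -
  have e: "h + cscale w 1 - cscale z 1 = h - cscale (z - w) 1"
    by (simp add: cscale_diff_left algebra_simps)
  show ?thesis unfolding spectrum_def mem_Collect_eq e by (rule refl)
qed

lemma sa_spec_real:
  fixes h :: "'a::cstar_algebra"
  assumes sa: "self_adjoint h" and z: "z \<in> spectrum h" shows "Im z = 0"
proof (rule ccontr)
  assume nz: "Im z \<noteq> 0"
  have key: "(Re z)^2 + (Im z + t)^2 \<le> (norm h)^2 + t^2" for t :: real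
  proof -
    define y where "y = h + cscale (\<i> * complex_of_real t) 1"
    have "z + \<i> * complex_of_real t \<in> spectrum y"
      unfolding y_def spec_shift using z by simp
    then have c: "cmod (z + \<i> * complex_of_real t) \<le> norm y" by (rule spec_bound)
    have ay: "adj y = h + cscale (- (\<i> * complex_of_real t)) 1"
      using sa by (simp add: y_def self_adjoint_def adj_add adj_cscale)
    have "adj y * y = h * h + (cscale (\<i> * complex_of_real t) h + cscale (- (\<i> * complex_of_real t)) h)
        + cscale (- (\<i> * complex_of_real t) * (\<i> * complex_of_real t)) 1"
      unfolding ay
      by (simp add: y_def cscale_add_right distrib_left distrib_right cscale_mult_left cscale_mult_right cscale_cscale algebra_simps)
    also have "\<dots> = h * h + cscale (complex_of_real (t^2)) 1"
    proof -
      have q: "\<i> * complex_of_real t * (\<i> * complex_of_real t) = - (complex_of_real t * complex_of_real t)"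
        by (simp add: complex_eq_iff)
      show ?thesis by (simp add: cscale_minus_left power2_eq_square q)
    qed
    finally have yy: "adj y * y = h * h + cscale (complex_of_real (t^2)) 1" .
    have "(norm y)^2 = norm (adj y * y)" by (simp add: cstar_identity)
    also have "\<dots> \<le> norm (h*h) + norm (cscale (complex_of_real (t^2)) (1::'a))"
      unfolding yy by (rule norm_triangle_ineq)
    also have "\<dots> \<le> (norm h)^2 + t^2"
      using norm_mult_ineq[of h h] by (simp add: norm_cscale power2_eq_square norm_mult abs_mult_self_eq)
    finally have n: "(norm y)^2 \<le> (norm h)^2 + t^2" .
    have "(cmod (z + \<i> * complex_of_real t))^2 \<le> (norm y)^2"
      using c by (simp add: power_mono)
    moreover have "(cmod (z + \<i> * complex_of_real t))^2 = (Re z)^2 + (Im z + t)^2"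
      by (simp add: cmod_power2)
    ultimately show ?thesis using n by linarith
  qed
  define t where "t = (norm h)^2 / (2 * Im z)"
  have "2 * Im z * t = (norm h)^2" unfolding t_def using nz by simp
  moreover have "(Im z)^2 > 0" using nz by simp
  moreover have "(Re z)^2 \<ge> 0" by simp
  moreover have "(Re z)^2 + (Im z + t)^2 = (Re z)^2 + (Im z)^2 + 2 * Im z * t + t^2"
    by (simp add: power2_eq_square algebra_simps)
  ultimately have "(Re z)^2 + (Im z + t)^2 > (norm h)^2 + t^2"
    by linarith
  with key[of t] show False by linarith
qed

lemma shift_pos:
  fixes h :: "'a::cstar_algebra"
  assumes sa: "self_adjoint h"
  shows "positive (h + cscale (complex_of_real (norm h)) 1)"
  unfolding positive_def
proof
  show "self_adjoint (h + cscale (complex_of_real (norm h)) 1)"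
    using sa by (simp add: self_adjoint_def adj_add adj_cscale)
  show "spectrum (h + cscale (complex_of_real (norm h)) 1) \<subseteq> {z. Im z = 0 \<and> 0 \<le> Re z}"
  proof
    fix z assume "z \<in> spectrum (h + cscale (complex_of_real (norm h)) 1)"
    then have w: "z - complex_of_real (norm h) \<in> spectrum h" by (simp add: spec_shift)
    have "Im z = 0" using sa_spec_real[OF sa w] by simp
    moreover have "\<bar>Re z - norm h\<bar> \<le> norm h"
      using spec_bound[OF w] abs_Re_le_cmod[of "z - complex_of_real (norm h)"] by simp
    ultimately show "z \<in> {z. Im z = 0 \<and> 0 \<le> Re z}" by auto
  qed
qed


lemma CA_sub: "C \<in> CA \<Longrightarrow> unital_cstar_subalgebra C"
  unfolding CA_def by blast

lemma sub_add: "unital_cstar_subalgebra C \<Longrightarrow> x \<in> C \<Longrightarrow> y \<in> C \<Longrightarrow> x + y \<in> C"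
  unfolding unital_cstar_subalgebra_def by blast
lemma sub_cscale: "unital_cstar_subalgebra C \<Longrightarrow> x \<in> C \<Longrightarrow> cscale c x \<in> C"
  unfolding unital_cstar_subalgebra_def by blast
lemma sub_adj: "unital_cstar_subalgebra C \<Longrightarrow> x \<in> C \<Longrightarrow> adj x \<in> C"
  unfolding unital_cstar_subalgebra_def by blast
lemma sub_one: "unital_cstar_subalgebra C \<Longrightarrow> 1 \<in> C"
  unfolding unital_cstar_subalgebra_def by blast
lemma sub_scaleR: "unital_cstar_subalgebra C \<Longrightarrow> x \<in> C \<Longrightarrow> scaleR r x \<in> C"
  by (simp add: scaleR_cscale sub_cscale)
lemma sub_diff: "unital_cstar_subalgebra C \<Longrightarrow> x \<in> C \<Longrightarrow> y \<in> C \<Longrightarrow> x - y \<in> C"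
  using sub_add[of C x "cscale (-1) y"] sub_cscale[of C y "-1"]
  by (simp add: cscale_minus_left cscale_one)
lemma sub_re: "unital_cstar_subalgebra C \<Longrightarrow> x \<in> C \<Longrightarrow> re_part x \<in> C"
  unfolding re_part_def by (intro sub_cscale sub_add sub_adj)
lemma sub_im: "unital_cstar_subalgebra C \<Longrightarrow> x \<in> C \<Longrightarrow> im_part x \<in> C"
  unfolding im_part_def by (intro sub_cscale sub_diff sub_adj)

lemma sa_add: "self_adjoint f \<Longrightarrow> self_adjoint g \<Longrightarrow> self_adjoint (f + g)"
  by (simp add: self_adjoint_def adj_add)
lemma sa_scaleR: "self_adjoint f \<Longrightarrow> self_adjoint (scaleR r f)"
  by (simp add: self_adjoint_def scaleR_cscale adj_cscale)
lemma sa_zero: "self_adjoint (0::'a::cstar_algebra)"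
  by (simp add: self_adjoint_def)
lemma sa_one: "self_adjoint (1::'a::cstar_algebra)"
  by (simp add: self_adjoint_def)

lemma re_add: "re_part (x + y) = re_part x + re_part y"
proof -
  have e: "x + y + adj (x + y) = (x + adj x) + (y + adj y)" by (simp add: adj_add algebra_simps)
  show ?thesis unfolding re_part_def by (simp only: e cscale_add_right)
qed
lemma im_add: "im_part (x + y) = im_part x + im_part y"
proof -
  have e: "x + y - adj (x + y) = (x - adj x) + (y - adj y)" by (simp add: adj_add algebra_simps)
  show ?thesis unfolding im_part_def by (simp only: e cscale_add_right)
qed

lemma sa_re_im: "self_adjoint a \<Longrightarrow> re_part a = a \<and> im_part a = 0"
proof -
  assume a: "self_adjoint a"
  have "re_part (a + cscale \<i> 0) = a" "im_part (a + cscale \<i> 0) = 0"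
    by (rule re_im_unique[OF a sa_zero])+
  then show ?thesis by simp
qed

lemma cscale_decomp:
  fixes h k :: "'a::cstar_algebra"
  shows "cscale c (h + cscale \<i> k) =
     (scaleR (Re c) h + scaleR (- Im c) k) + cscale \<i> (scaleR (Re c) k + scaleR (Im c) h)"
proof -
  have c: "c = complex_of_real (Re c) + \<i> * complex_of_real (Im c)" by (simp add: complex_eq_iff)
  have q: "\<i> * complex_of_real (Im c) * \<i> = - complex_of_real (Im c)" by (simp add: complex_eq_iff)
  show ?thesis
    apply (subst c)
    apply (simp add: scaleR_cscale cscale_add_left cscale_add_right cscale_cscale cscale_minus_left q)
    apply (simp add: algebra_simps cscale_diff_left)
    done
qed

lemma re_im_cscale:
  fixes x :: "'a::cstar_algebra"
  shows "re_part (cscale c x) = scaleR (Re c) (re_part x) + scaleR (- Im c) (im_part x)"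
    "im_part (cscale c x) = scaleR (Re c) (im_part x) + scaleR (Im c) (re_part x)"
proof -
  have e: "cscale c x = (scaleR (Re c) (re_part x) + scaleR (- Im c) (im_part x))
       + cscale \<i> (scaleR (Re c) (im_part x) + scaleR (Im c) (re_part x))"
    using cscale_decomp[of c "re_part x" "im_part x"] re_im[of x] by simp
  have s1: "self_adjoint (scaleR (Re c) (re_part x) + scaleR (- Im c) (im_part x))"
    by (intro sa_add sa_scaleR re_sa im_sa)
  have s2: "self_adjoint (scaleR (Re c) (im_part x) + scaleR (Im c) (re_part x))"
    by (intro sa_add sa_scaleR re_sa im_sa)
  show "re_part (cscale c x) = scaleR (Re c) (re_part x) + scaleR (- Im c) (im_part x)"
    unfolding e using re_im_unique(1)[OF s1 s2] .
  show "im_part (cscale c x) = scaleR (Re c) (im_part x) + scaleR (Im c) (re_part x)"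
    unfolding e using re_im_unique(2)[OF s1 s2] .
qed


lemma gen_le:
  fixes f :: "'a::cstar_algebra"
  assumes "C \<in> CA" "f \<in> C" shows "gen_cstar f \<subseteq> C"
  using assms by (intro gen_least CA_sub)

lemma pi_parts:
  fixes I :: "'a::cstar_algebra set \<Rightarrow> 'a \<Rightarrow> real"
  assumes PI: "prob_integral_family I"
  shows pi_add: "\<And>C f g. C \<in> CA \<Longrightarrow> f \<in> C \<Longrightarrow> g \<in> C \<Longrightarrow> self_adjoint f \<Longrightarrow> self_adjoint g \<Longrightarrow> I C (f + g) = I C f + I C g"
    and pi_scl: "\<And>C f r. C \<in> CA \<Longrightarrow> f \<in> C \<Longrightarrow> self_adjoint f \<Longrightarrow> I C (scaleR r f) = r * I C f"
    and pi_pos: "\<And>C f. C \<in> CA \<Longrightarrow> f \<in> C \<Longrightarrow> positive f \<Longrightarrow> I C f \<ge> 0"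
    and pi_one: "\<And>C. C \<in> CA \<Longrightarrow> I C 1 = 1"
    and pi_nat: "\<And>C D f. C \<in> CA \<Longrightarrow> D \<in> CA \<Longrightarrow> C \<subseteq> D \<Longrightarrow> f \<in> C \<Longrightarrow> self_adjoint f \<Longrightarrow> I D f = I C f"
    and pi_ext: "\<And>C f. \<not> (C \<in> CA \<and> f \<in> C \<and> self_adjoint f) \<Longrightarrow> I C f = 0"
proof -
  note H = PI[unfolded prob_integral_family_def]
  have H1: "\<forall>C\<in>CA.
        (\<forall>f\<in>C. \<forall>g\<in>C. self_adjoint f \<longrightarrow> self_adjoint g \<longrightarrow> I C (f + g) = I C f + I C g) \<and>
        (\<forall>f\<in>C. \<forall>r. self_adjoint f \<longrightarrow> I C (scaleR r f) = r * I C f) \<and>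
        (\<forall>f\<in>C. positive f \<longrightarrow> I C f \<ge> 0) \<and>
        I C 1 = 1" using H by (rule conjunct1)
  have H2: "\<forall>C\<in>CA. \<forall>D\<in>CA. C \<subseteq> D \<longrightarrow> (\<forall>f\<in>C. self_adjoint f \<longrightarrow> I D f = I C f)"
    using H by (rule conjunct1[OF conjunct2])
  have H3: "\<forall>C f. \<not> (C \<in> CA \<and> f \<in> C \<and> self_adjoint f) \<longrightarrow> I C f = 0"
    using H by (rule conjunct2[OF conjunct2])
  show "\<And>C f g. C \<in> CA \<Longrightarrow> f \<in> C \<Longrightarrow> g \<in> C \<Longrightarrow> self_adjoint f \<Longrightarrow> self_adjoint g \<Longrightarrow> I C (f + g) = I C f + I C g"
    using H1 by blast
  show "\<And>C f r. C \<in> CA \<Longrightarrow> f \<in> C \<Longrightarrow> self_adjoint f \<Longrightarrow> I C (scaleR r f) = r * I C f"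
    using H1 by blast
  show "\<And>C f. C \<in> CA \<Longrightarrow> f \<in> C \<Longrightarrow> positive f \<Longrightarrow> I C f \<ge> 0"
    using H1 by blast
  show "\<And>C. C \<in> CA \<Longrightarrow> I C 1 = 1"
    using H1 by blast
  show "\<And>C D f. C \<in> CA \<Longrightarrow> D \<in> CA \<Longrightarrow> C \<subseteq> D \<Longrightarrow> f \<in> C \<Longrightarrow> self_adjoint f \<Longrightarrow> I D f = I C f"
    using H2 by blast
  show "\<And>C f. \<not> (C \<in> CA \<and> f \<in> C \<and> self_adjoint f) \<Longrightarrow> I C f = 0"
    using H3 by blast
qed

lemma pi_zero:
  fixes I :: "'a::cstar_algebra set \<Rightarrow> 'a \<Rightarrow> real"
  assumes PI: "prob_integral_family I" shows "I C 0 = 0"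
proof (cases "C \<in> CA")
  case True
  have z: "(0::'a) \<in> C" using sub_cscale[OF CA_sub[OF True] sub_one[OF CA_sub[OF True]], of 0] by simp
  have "I C (scaleR 0 0) = 0 * I C 0" by (rule pi_scl[OF PI True z sa_zero])
  then show ?thesis by simp
next
  case False
  then show ?thesis using PI unfolding prob_integral_family_def by blast
qed

lemma pi_gen:
  fixes I :: "'a::cstar_algebra set \<Rightarrow> 'a \<Rightarrow> real"
  assumes PI: "prob_integral_family I" and C: "C \<in> CA" "f \<in> C" "self_adjoint f"
  shows "I (gen_cstar f) f = I C f"
proof -
  have "gen_cstar f \<in> CA" using gen_CA C by blast
  then show ?thesis using pi_nat[OF PI _ C(1) gen_le[OF C(1,2)] gen_mem[of f] C(3)] by simp
qed

lemma rho_C: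
  fixes I :: "'a::cstar_algebra set \<Rightarrow> 'a \<Rightarrow> real"
  assumes PI: "prob_integral_family I" and C: "C \<in> CA" "x \<in> C"
  shows "pi_to_qs I x = complex_of_real (I C (re_part x)) + \<i> * complex_of_real (I C (im_part x))"
  unfolding pi_to_qs_def
  using pi_gen[OF PI C(1) sub_re[OF CA_sub[OF C(1)] C(2)] re_sa]
        pi_gen[OF PI C(1) sub_im[OF CA_sub[OF C(1)] C(2)] im_sa] by simp

lemma rho_sa:
  fixes I :: "'a::cstar_algebra set \<Rightarrow> 'a \<Rightarrow> real"
  assumes PI: "prob_integral_family I" and a: "self_adjoint a"
  shows "pi_to_qs I a = complex_of_real (I (gen_cstar a) a)"
  unfolding pi_to_qs_def using sa_re_im[OF a] pi_zero[OF PI] by simp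

lemma pi_to_qs_state:
  fixes I :: "'a::cstar_algebra set \<Rightarrow> 'a \<Rightarrow> real"
  assumes PI: "prob_integral_family I"
  shows "quasi_state (pi_to_qs I)"
proof -
  note add = pi_add[OF PI] and scl = pi_scl[OF PI]
  have lin: "I C (scaleR r f + scaleR s g) = r * I C f + s * I C g"
    if "C \<in> CA" "f \<in> C" "g \<in> C" "self_adjoint f" "self_adjoint g" for C f g r s
    using that by (simp add: add scl sub_scaleR CA_sub sa_scaleR)
  have QL1: "pi_to_qs I (x + y) = pi_to_qs I x + pi_to_qs I y \<and>
             pi_to_qs I (cscale c x) = c * pi_to_qs I x"
    if C: "C \<in> CA" "x \<in> C" "y \<in> C" for C x y c
  proof
    have U: "unital_cstar_subalgebra C" using CA_sub[OF C(1)] .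
    have xy: "x + y \<in> C" by (rule sub_add[OF U C(2,3)])
    show "pi_to_qs I (x + y) = pi_to_qs I x + pi_to_qs I y"
      unfolding rho_C[OF PI C(1) xy] rho_C[OF PI C(1) C(2)] rho_C[OF PI C(1) C(3)] re_add im_add
      using add[OF C(1) sub_re[OF U C(2)] sub_re[OF U C(3)] re_sa re_sa]
            add[OF C(1) sub_im[OF U C(2)] sub_im[OF U C(3)] im_sa im_sa]
      by (simp add: algebra_simps)
    have cx: "cscale c x \<in> C" by (rule sub_cscale[OF U C(2)])
    show "pi_to_qs I (cscale c x) = c * pi_to_qs I x"
      unfolding rho_C[OF PI C(1) cx] rho_C[OF PI C(1) C(2)] re_im_cscale
      using lin[OF C(1) sub_re[OF U C(2)] sub_im[OF U C(2)] re_sa im_sa, of "Re c" "- Im c"]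
            lin[OF C(1) sub_im[OF U C(2)] sub_re[OF U C(2)] im_sa re_sa, of "Re c" "Im c"]
      by (simp add: complex_eq_iff)
  qed
  have QL2: "pi_to_qs I (a + cscale \<i> b) = pi_to_qs I a + \<i> * pi_to_qs I b"
    if "self_adjoint a" "self_adjoint b" for a b
    using re_im_unique[OF that] rho_sa[OF PI that(1)] rho_sa[OF PI that(2)]
    unfolding pi_to_qs_def by simp
  have POS: "Im (pi_to_qs I a) = 0 \<and> Re (pi_to_qs I a) \<ge> 0" if "positive a" for a
  proof -
    have a: "self_adjoint a" using that positive_def by blast
    have "I (gen_cstar a) a \<ge> 0"
      using pi_pos[OF PI gen_CA[OF a] gen_mem[of a] that] .
    then show ?thesis using rho_sa[OF PI a] by simp
  qed
  have ONE: "pi_to_qs I 1 = 1"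
  proof -
    have "I (gen_cstar 1) (1::'a) = 1"
      using pi_one[OF PI gen_CA[OF sa_one]] .
    then show ?thesis using rho_sa[OF PI sa_one] by simp
  qed
  show ?thesis unfolding quasi_state_def quasi_linear_def
  proof (intro conjI ballI allI impI)
    fix C and x y :: 'a and c assume "C \<in> CA" "x \<in> C" "y \<in> C"
    then show "pi_to_qs I (x + y) = pi_to_qs I x + pi_to_qs I y"
      "pi_to_qs I (cscale c x) = c * pi_to_qs I x" using QL1 by blast+
  qed (use QL2 POS ONE in auto)
qed

lemma pi_roundtrip:
  fixes I :: "'a::cstar_algebra set \<Rightarrow> 'a \<Rightarrow> real"
  assumes PI: "prob_integral_family I"
  shows "qs_to_pi (pi_to_qs I) = I"
proof (intro ext)
  fix C and f :: 'a
  show "qs_to_pi (pi_to_qs I) C f = I C f"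
  proof (cases "C \<in> CA \<and> f \<in> C \<and> self_adjoint f")
    case True
    then show ?thesis unfolding qs_to_pi_def using rho_sa[OF PI] pi_gen[OF PI] by simp
  next
    case False
    then show ?thesis unfolding qs_to_pi_def using pi_ext[OF PI, of C f] by auto
  qed
qed


lemma qs_parts:
  fixes \<rho> :: "'a::cstar_algebra \<Rightarrow> complex"
  assumes QS: "quasi_state \<rho>"
  shows qs_add: "\<And>C x y. C \<in> CA \<Longrightarrow> x \<in> C \<Longrightarrow> y \<in> C \<Longrightarrow> \<rho> (x + y) = \<rho> x + \<rho> y"
    and qs_scl: "\<And>C x c. C \<in> CA \<Longrightarrow> x \<in> C \<Longrightarrow> \<rho> (cscale c x) = c * \<rho> x"
    and qs_ri: "\<And>a b. self_adjoint a \<Longrightarrow> self_adjoint b \<Longrightarrow> \<rho> (a + cscale \<i> b) = \<rho> a + \<i> * \<rho> b"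
    and qs_pos: "\<And>a. positive a \<Longrightarrow> Im (\<rho> a) = 0 \<and> Re (\<rho> a) \<ge> 0"
    and qs_one: "\<rho> 1 = 1"
proof -
  note H = QS[unfolded quasi_state_def quasi_linear_def]
  show "\<And>C x y. C \<in> CA \<Longrightarrow> x \<in> C \<Longrightarrow> y \<in> C \<Longrightarrow> \<rho> (x + y) = \<rho> x + \<rho> y"
    using H by blast
  show "\<And>C x c. C \<in> CA \<Longrightarrow> x \<in> C \<Longrightarrow> \<rho> (cscale c x) = c * \<rho> x"
    using H by blast
  show "\<And>a b. self_adjoint a \<Longrightarrow> self_adjoint b \<Longrightarrow> \<rho> (a + cscale \<i> b) = \<rho> a + \<i> * \<rho> b"
    using H by blast
  show "\<And>a. positive a \<Longrightarrow> Im (\<rho> a) = 0 \<and> Re (\<rho> a) \<ge> 0"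
    using H by blast
  show "\<rho> 1 = 1" using H by blast
qed

lemma qs_real:
  fixes \<rho> :: "'a::cstar_algebra \<Rightarrow> complex"
  assumes QS: "quasi_state \<rho>" and h: "self_adjoint h"
  shows "Im (\<rho> h) = 0"
proof -
  define C where "C = gen_cstar h"
  have C: "C \<in> CA" unfolding C_def by (rule gen_CA[OF h])
  have U: "unital_cstar_subalgebra C" by (rule CA_sub[OF C])
  have hC: "h \<in> C" unfolding C_def by (rule gen_mem)
  have sC: "cscale (complex_of_real (norm h)) 1 \<in> C" by (intro sub_cscale sub_one U)
  have "\<rho> (h + cscale (complex_of_real (norm h)) 1) = \<rho> h + \<rho> (cscale (complex_of_real (norm h)) 1)"
    by (rule qs_add[OF QS C hC sC])
  also have "\<rho> (cscale (complex_of_real (norm h)) 1) = complex_of_real (norm h)"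
    using qs_scl[OF QS C sub_one[OF U]] qs_one[OF QS] by simp
  finally have e: "\<rho> (h + cscale (complex_of_real (norm h)) 1) = \<rho> h + complex_of_real (norm h)" .
  have "Im (\<rho> (h + cscale (complex_of_real (norm h)) 1)) = 0"
    using qs_pos[OF QS shift_pos[OF h]] by blast
  then show ?thesis unfolding e by simp
qed

lemma qs_to_pi_family:
  fixes \<rho> :: "'a::cstar_algebra \<Rightarrow> complex"
  assumes QS: "quasi_state \<rho>"
  shows "prob_integral_family (qs_to_pi \<rho>)"
  unfolding prob_integral_family_def
proof (intro conjI ballI allI impI)
  fix C :: "'a set" assume C: "C \<in> CA"
  have U: "unital_cstar_subalgebra C" by (rule CA_sub[OF C])
  {
    fix f g :: 'a assume f: "f \<in> C" and g: "g \<in> C" and sf: "self_adjoint f" and sg: "self_adjoint g"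
    show "qs_to_pi \<rho> C (f + g) = qs_to_pi \<rho> C f + qs_to_pi \<rho> C g"
      unfolding qs_to_pi_def using C f g sf sg sub_add[OF U f g] sa_add[OF sf sg] qs_add[OF QS C f g]
      by simp
  }
  {
    fix f :: 'a and r :: real assume f: "f \<in> C" and sf: "self_adjoint f"
    show "qs_to_pi \<rho> C (scaleR r f) = r * qs_to_pi \<rho> C f"
      unfolding qs_to_pi_def using C f sf sub_scaleR[OF U f] sa_scaleR[OF sf]
        qs_scl[OF QS C f, of "complex_of_real r"]
      by (simp add: scaleR_cscale)
  }
  {
    fix f :: 'a assume f: "f \<in> C" and pf: "positive f"
    show "qs_to_pi \<rho> C f \<ge> 0"
      unfolding qs_to_pi_def using C f pf qs_pos[OF QS pf] by (simp add: positive_def)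
  }
  show "qs_to_pi \<rho> C 1 = 1"
    unfolding qs_to_pi_def using C sub_one[OF U] sa_one qs_one[OF QS] by simp
next
  fix C D :: "'a set" and f :: 'a assume "C \<in> CA" "D \<in> CA" "C \<subseteq> D" "f \<in> C" "self_adjoint f"
  then show "qs_to_pi \<rho> D f = qs_to_pi \<rho> C f" unfolding qs_to_pi_def by auto
next
  fix C :: "'a set" and f :: 'a assume "\<not> (C \<in> CA \<and> f \<in> C \<and> self_adjoint f)"
  then show "qs_to_pi \<rho> C f = 0" unfolding qs_to_pi_def by auto
qed

lemma qs_roundtrip:
  fixes \<rho> :: "'a::cstar_algebra \<Rightarrow> complex"
  assumes QS: "quasi_state \<rho>"
  shows "pi_to_qs (qs_to_pi \<rho>) = \<rho>"
proof
  fix a :: 'a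
  have v: "qs_to_pi \<rho> (gen_cstar h) h = Re (\<rho> h)" if "self_adjoint h" for h :: 'a
    unfolding qs_to_pi_def using gen_CA[OF that] gen_mem[of h] that by simp
  have r: "complex_of_real (Re (\<rho> h)) = \<rho> h" if "self_adjoint h" for h :: 'a
    using qs_real[OF QS that] by (simp add: complex_eq_iff)
  have "pi_to_qs (qs_to_pi \<rho>) a = \<rho> (re_part a) + \<i> * \<rho> (im_part a)"
    unfolding pi_to_qs_def v[OF re_sa] v[OF im_sa] r[OF re_sa] r[OF im_sa] ..
  also have "\<dots> = \<rho> (re_part a + cscale \<i> (im_part a))"
    by (rule qs_ri[OF QS re_sa im_sa, symmetric])
  also have "\<dots> = \<rho> a" using re_im[of a] by simp
  finally show "pi_to_qs (qs_to_pi \<rho>) a = \<rho> a" .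
qed

lemma faithful_equiv:
  fixes \<rho> :: "'a::cstar_algebra \<Rightarrow> complex"
  assumes QS: "quasi_state \<rho>"
  shows "faithful_qs \<rho> \<longleftrightarrow> faithful_pi (qs_to_pi \<rho>)"
proof
  assume F: "faithful_qs \<rho>"
  show "faithful_pi (qs_to_pi \<rho>)" unfolding faithful_pi_def
  proof (intro ballI impI)
    fix C :: "'a set" and f :: 'a assume C: "C \<in> CA" and f: "f \<in> C" and p: "positive f"
      and z: "qs_to_pi \<rho> C f = 0"
    have "Re (\<rho> f) = 0" using z C f p unfolding qs_to_pi_def positive_def by simp
    moreover have "Im (\<rho> f) = 0" using qs_pos[OF QS p] by blast
    ultimately have "\<rho> f = 0" by (simp add: complex_eq_iff)
    then show "f = 0" using F p unfolding faithful_qs_def by blast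
  qed
next
  assume F: "faithful_pi (qs_to_pi \<rho>)"
  show "faithful_qs \<rho>" unfolding faithful_qs_def
  proof (intro allI impI)
    fix a :: 'a assume p: "positive a" and z: "\<rho> a = 0"
    have sa: "self_adjoint a" using p positive_def by blast
    have "qs_to_pi \<rho> (gen_cstar a) a = 0"
      unfolding qs_to_pi_def using z by simp
    then show "a = 0" using F gen_CA[OF sa] gen_mem[of a] p unfolding faithful_pi_def by blast
  qed
qed

theorem theorem6:
  fixes dummy :: "'a :: cstar_algebra"
  shows "bij_betw (qs_to_pi :: ('a \<Rightarrow> complex) \<Rightarrow> _)
            {\<rho>. quasi_state \<rho>} {I. prob_integral_family I}
       \<and> (\<forall>I. prob_integral_family (I :: 'a set \<Rightarrow> 'a \<Rightarrow> real) \<longrightarrow>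
              quasi_state (pi_to_qs I) \<and> qs_to_pi (pi_to_qs I) = I)
       \<and> (\<forall>\<rho> :: 'a \<Rightarrow> complex. quasi_state \<rho> \<longrightarrow> pi_to_qs (qs_to_pi \<rho>) = \<rho>)
       \<and> (\<forall>\<rho> :: 'a \<Rightarrow> complex. quasi_state \<rho> \<longrightarrow>
              (faithful_qs \<rho> \<longleftrightarrow> faithful_pi (qs_to_pi \<rho>)))"
proof (intro conjI allI impI)
  show "bij_betw (qs_to_pi :: ('a \<Rightarrow> complex) \<Rightarrow> _) {\<rho>. quasi_state \<rho>} {I. prob_integral_family I}"
    by (rule bij_betw_byWitness[where f'=pi_to_qs])
       (auto simp: qs_roundtrip pi_roundtrip qs_to_pi_family pi_to_qs_state)
qed (auto simp: qs_roundtrip pi_roundtrip pi_to_qs_state faithful_equiv)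

end
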